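(* Let $M_J:\mathcal{S}^n\to\mathcal{X}^n$ be $(\varepsilon_J,\delta)$-jointly differentially private and let $M_D:\mathcal{X}^n\to O$ be $\varepsilon_D$-differentially private. Define $M:\mathcal{S}^n\to O$ by $M(\mathbf{s})=M_D(M_J(\mathbf{s}))$. Then $M$ is $(2\varepsilon_D+\varepsilon_J,\delta)$-differentially private.
   Context: A randomized $\mathcal{M}:\mathcal{S}^n\to\mathcal{O}^n$ is $(\varepsilon,\delta)$-jointly differentially private if for every $i\in[n]$, every $s_i,s_i'\in\mathcal{S}$, every $s_{-i}\in\mathcal{S}^{n-1}$ and every $B_{-i}\subseteq\mathcal{O}^{n-1}$: $\Pr[\mathcal{M}(s_i,s_{-i})_{-i}\in B_{-i}]\le e^{\varepsilon}\Pr[\mathcal{M}(s_i',s_{-i})_{-i}\in B_{-i}]+\delta$, where the subscript $-i$ denotes the outputs to all players other than $i$. A randomized $\mathcal{M}:\mathcal{D}^n\to\mathcal{O}$ is $(\varepsilon,\delta)$-differentially private if for every $i$, every $d_i,d_i'\in\mathcal{D}$, every $d_{-i}$ and every $B\subseteq\mathcal{O}$: $\Pr[\mathcal{M}(d_i,d_{-i})\in B]\le e^\varepsilon\Pr[\mathcal{M}(d_i',d_{-i})\in B]+\delta$; $\varepsilon$-differential privacy means $\delta=0$. *)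

theory Defs
  imports "HOL-Probability.Probability"
begin

text \<open>Players are indexed by a finite type 'i (playing the role of [n]).
The part of an output vector seen by the players other than i is its
restriction to UNIV - {i}, an element of the product space over UNIV - {i}.\<close>

definition jdp ::
  "'s set \<Rightarrow> 'x measure \<Rightarrow> real \<Rightarrow> real \<Rightarrow> (('i \<Rightarrow> 's) \<Rightarrow> ('i \<Rightarrow> 'x) measure) \<Rightarrow> bool" where
  "jdp S X eps delta M \<longleftrightarrow>
     (\<forall>i a b s. a \<in> S \<longrightarrow> b \<in> S \<longrightarrow> (\<forall>j. s j \<in> S) \<longrightarrow>
        (\<forall>B \<in> sets (PiM (UNIV - {i}) (\<lambda>_. X)).
           measure (M (s(i := a))) {x \<in> space (M (s(i := a))). restrict x (UNIV - {i}) \<in> B}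
             \<le> exp eps * measure (M (s(i := b))) {x \<in> space (M (s(i := b))). restrict x (UNIV - {i}) \<in> B}
               + delta))"

text \<open>(eps,delta)-differential privacy of M : D^n -> O, where the inputs
range over the set D of allowed data points; eps-DP is the case delta = 0.\<close>
definition dp ::
  "'d set \<Rightarrow> 'o measure \<Rightarrow> real \<Rightarrow> real \<Rightarrow> (('i \<Rightarrow> 'd) \<Rightarrow> 'o measure) \<Rightarrow> bool" where
  "dp D Out eps delta M \<longleftrightarrow>
     (\<forall>i a b d. a \<in> D \<longrightarrow> b \<in> D \<longrightarrow> (\<forall>j. d j \<in> D) \<longrightarrow>
        (\<forall>B \<in> sets Out.
           measure (M (d(i := a))) B \<le> exp eps * measure (M (d(i := b))) B + delta))"

end

theory Submission
  imports Defs
begin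

lemma layer_pw:
  fixes P :: "'a measure" and f :: "'a \<Rightarrow> real"
  assumes f: "f \<in> borel_measurable P"
  shows "(\<integral>\<^sup>+x. indicator {0..<f x} t \<partial>P) = indicator {0..} t * emeasure P {x\<in>space P. t < f x}"
proof (cases "0 \<le> t")
  case True
  have "(\<integral>\<^sup>+x. indicator {0..<f x} t \<partial>P) = (\<integral>\<^sup>+x. indicator {x\<in>space P. t < f x} x \<partial>P)"
    using True by (intro nn_integral_cong) (auto split: split_indicator)
  also have "\<dots> = emeasure P {x\<in>space P. t < f x}"
    using f by (intro nn_integral_indicator) measurable
  finally show ?thesis using True by simp
next
  case False
  then show ?thesis by (simp add: indicator_def)
qed

lemma layer_meas:
  fixes P :: "'a measure" and f :: "'a \<Rightarrow> real"
  assumes fm: "finite_measure P" and f: "f \<in> borel_measurable P"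
  shows "(\<lambda>t. indicator {0..} t * emeasure P {x\<in>space P. t < f x}) \<in> borel_measurable borel"
proof -
  interpret finite_measure P by fact
  have "(\<lambda>p. indicator {p. 0 \<le> fst p \<and> fst p < f (snd p)} p :: ennreal) \<in> borel_measurable (borel \<Otimes>\<^sub>M P)"
    using f by measurable
  moreover have "(\<lambda>p. indicator {p. 0 \<le> fst p \<and> fst p < f (snd p)} p :: ennreal) = (\<lambda>(t,x). indicator {0..<f x} t)"
    by (auto simp: fun_eq_iff split: split_indicator)
  ultimately have "(\<lambda>t. \<integral>\<^sup>+x. indicator {0..<f x} t \<partial>P) \<in> borel_measurable borel"
    using borel_measurable_nn_integral[of "\<lambda>t x. indicator {0..<f x} t" borel] by simp
  then show ?thesis using layer_pw[OF f] by simp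
qed

lemma layer1:
  fixes P :: "'a measure" and f :: "'a \<Rightarrow> real"
  assumes fm: "finite_measure P" and f: "f \<in> borel_measurable P"
    and nn: "\<And>x. x \<in> space P \<Longrightarrow> 0 \<le> f x"
  shows "(\<integral>\<^sup>+x. ennreal (f x) \<partial>P) = (\<integral>\<^sup>+t. indicator {0..} t * emeasure P {x\<in>space P. t < f x} \<partial>lborel)"
proof -
  interpret finite_measure P by fact
  interpret pair_sigma_finite P lborel
    unfolding pair_sigma_finite_def using sigma_finite_measure_axioms lborel.sigma_finite_measure_axioms by auto
  have m: "(\<lambda>(x,t). indicator {0..<f x} t :: ennreal) \<in> borel_measurable (P \<Otimes>\<^sub>M lborel)"
  proof -
    have "(\<lambda>(x,t). indicator {0..<f x} t :: ennreal) = (\<lambda>p. indicator {p. 0 \<le> snd p \<and> snd p < f (fst p)} p)"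
      by (auto simp: fun_eq_iff split: split_indicator)
    moreover have "(\<lambda>p. indicator {p. 0 \<le> snd p \<and> snd p < f (fst p)} p :: ennreal) \<in> borel_measurable (P \<Otimes>\<^sub>M lborel)"
      using f by measurable
    ultimately show ?thesis by simp
  qed
  have "(\<integral>\<^sup>+x. ennreal (f x) \<partial>P) = (\<integral>\<^sup>+x. (\<integral>\<^sup>+t. indicator {0..<f x} t \<partial>lborel) \<partial>P)"
    using nn by (intro nn_integral_cong) simp
  also have "\<dots> = (\<integral>\<^sup>+t. (\<integral>\<^sup>+x. indicator {0..<f x} t \<partial>P) \<partial>lborel)"
    using Fubini'[OF m] by simp
  also have "\<dots> = (\<integral>\<^sup>+t. indicator {0..} t * emeasure P {x\<in>space P. t < f x} \<partial>lborel)"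
  proof (intro nn_integral_cong)
    fix t :: real
    show "(\<integral>\<^sup>+x. indicator {0..<f x} t \<partial>P) = indicator {0..} t * emeasure P {x\<in>space P. t < f x}"
    proof (cases "0 \<le> t")
      case True
      have "(\<integral>\<^sup>+x. indicator {0..<f x} t \<partial>P) = (\<integral>\<^sup>+x. indicator {x\<in>space P. t < f x} x \<partial>P)"
        using True by (intro nn_integral_cong) (auto split: split_indicator)
      also have "\<dots> = emeasure P {x\<in>space P. t < f x}"
        using f by (intro nn_integral_indicator) measurable
      finally show ?thesis using True by simp
    next
      case False
      then show ?thesis by (simp add: indicator_def)
    qed
  qed
  finally show ?thesis .
qed

lemma layer2:
  fixes P Q :: "'a measure" and f :: "'a \<Rightarrow> real"
  assumes fP: "finite_measure P" and fQ: "finite_measure Q" and sQ: "sets P = sets Q"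
    and f: "f \<in> borel_measurable P"
    and nn: "\<And>x. x \<in> space P \<Longrightarrow> 0 \<le> f x \<and> f x \<le> 1"
    and d: "0 \<le> \<delta>"
    and H: "\<And>t. emeasure P {x\<in>space P. t < f x} \<le> ennreal c * emeasure Q {x\<in>space Q. t < f x} + ennreal \<delta>"
  shows "(\<integral>\<^sup>+x. ennreal (f x) \<partial>P) \<le> ennreal c * (\<integral>\<^sup>+x. ennreal (f x) \<partial>Q) + ennreal \<delta>"
proof -
  have spQ: "space Q = space P" using sQ sets_eq_imp_space_eq by metis
  have fQm: "f \<in> borel_measurable Q" using f sQ measurable_cong_sets by blast
  have "(\<integral>\<^sup>+x. ennreal (f x) \<partial>P) = (\<integral>\<^sup>+t. indicator {0..} t * emeasure P {x\<in>space P. t < f x} \<partial>lborel)"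
    using layer1[OF fP f] nn by blast
  also have "\<dots> \<le> (\<integral>\<^sup>+t. ennreal c * (indicator {0..} t * emeasure Q {x\<in>space Q. t < f x}) + indicator {0..<1} t * ennreal \<delta> \<partial>lborel)"
  proof (intro nn_integral_mono)
    fix t :: real
    show "indicator {0..} t * emeasure P {x\<in>space P. t < f x} \<le> ennreal c * (indicator {0..} t * emeasure Q {x\<in>space Q. t < f x}) + indicator {0..<1} t * ennreal \<delta>"
    proof (cases "0 \<le> t \<and> t < 1")
      case True then show ?thesis using H[of t] by (simp add: indicator_def)
    next
      case False
      then consider "t < 0" | "1 \<le> t" by linarith
      then show ?thesis
      proof cases
        case 1 then show ?thesis by (simp add: indicator_def)
      next
        case 2
        have "{x\<in>space P. t < f x} = {}" using 2 nn by force
        then show ?thesis by (simp del: Collect_empty_eq)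
      qed
    qed
  qed
  also have "\<dots> = ennreal c * (\<integral>\<^sup>+t. indicator {0..} t * emeasure Q {x\<in>space Q. t < f x} \<partial>lborel) + (\<integral>\<^sup>+(t::real). indicator {0..<1} t * ennreal \<delta> \<partial>lborel)"
  proof -
    have m1: "(\<lambda>t. indicator {0..} t * emeasure Q {x\<in>space Q. t < f x}) \<in> borel_measurable lborel"
      using layer_meas[OF fQ fQm] by simp
    have "(\<integral>\<^sup>+t. ennreal c * (indicator {0..} t * emeasure Q {x\<in>space Q. t < f x}) + indicator {0..<1} t * ennreal \<delta> \<partial>lborel)
      = (\<integral>\<^sup>+t. ennreal c * (indicator {0..} t * emeasure Q {x\<in>space Q. t < f x}) \<partial>lborel) + (\<integral>\<^sup>+(t::real). indicator {0..<1} t * ennreal \<delta> \<partial>lborel)"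
      by (rule nn_integral_add[where f="\<lambda>t. ennreal c * (indicator {0..} t * emeasure Q {x\<in>space Q. t < f x})" and g="\<lambda>t. indicator {0..<1} t * ennreal \<delta>"]) (use m1 in auto)
    also have "(\<integral>\<^sup>+t. ennreal c * (indicator {0..} t * emeasure Q {x\<in>space Q. t < f x}) \<partial>lborel) = ennreal c * (\<integral>\<^sup>+t. indicator {0..} t * emeasure Q {x\<in>space Q. t < f x} \<partial>lborel)"
      using m1 by (rule nn_integral_cmult)
    finally show ?thesis .
  qed
  also have "(\<integral>\<^sup>+(t::real). indicator {0..<1} t * ennreal \<delta> \<partial>lborel) = ennreal \<delta>"
    by (subst nn_integral_multc) auto
  also have "(\<integral>\<^sup>+t. indicator {0..} t * emeasure Q {x\<in>space Q. t < f x} \<partial>lborel) = (\<integral>\<^sup>+x. ennreal (f x) \<partial>Q)"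
    using layer1[OF fQ fQm] nn spQ by simp
  finally show ?thesis .
qed

lemma pem: "prob_space M \<Longrightarrow> emeasure M A = ennreal (measure M A)"
  using finite_measure.emeasure_eq_measure[OF prob_space.finite_measure] by blast

theorem lemma3p2:
  fixes MJ :: "('i::finite \<Rightarrow> 's) \<Rightarrow> ('i \<Rightarrow> 'x) measure"
    and MD :: "('i \<Rightarrow> 'x) \<Rightarrow> 'o measure"
    and X :: "'x measure" and Out :: "'o measure"
    and epsJ epsD delta :: real
  assumes MJ_prob: "\<And>s. MJ s \<in> space (prob_algebra (PiM UNIV (\<lambda>_::'i. X)))"
    and MD_kernel: "MD \<in> measurable (PiM UNIV (\<lambda>_::'i. X)) (prob_algebra Out)"
    and MJ_jdp: "jdp (UNIV :: 's set) X epsJ delta MJ"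
    and MD_dp: "dp (space X) Out epsD 0 MD"
  shows "dp (UNIV :: 's set) Out (2 * epsD + epsJ) delta (\<lambda>s. MJ s \<bind> MD)"
  unfolding dp_def
proof (intro allI impI ballI)
  fix i :: 'i and a b :: 's and s :: "'i \<Rightarrow> 's" and B
  assume B: "B \<in> sets Out"
  define X' where "X' = PiM UNIV (\<lambda>_::'i. X)"
  define R where "R = PiM (UNIV - {i}) (\<lambda>_::'i. X)"
  define Pa where "Pa = MJ (s(i := a))"
  define Pb where "Pb = MJ (s(i := b))"
  have Pa: "prob_space Pa" "sets Pa = sets X'" and Pb: "prob_space Pb" "sets Pb = sets X'"
    using MJ_prob[of "s(i:=a)"] MJ_prob[of "s(i:=b)"] unfolding Pa_def Pb_def X'_def space_prob_algebra by simp_all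
  have spPa: "space Pa = space X'" and spPb: "space Pb = space X'"
    using Pa Pb sets_eq_imp_space_eq by metis+
  have spX': "space X' = (\<Pi>\<^sub>E j\<in>UNIV. space X)" unfolding X'_def space_PiM by simp
  obtain x0 where "x0 \<in> space Pa" using prob_space.not_empty[OF Pa(1)] by blast
  then have c: "x0 i \<in> space X" using spPa spX' by auto
  define c where "c = x0 i"
  have cX: "c \<in> space X" using c c_def by simp
  have d0: "0 \<le> delta"
  proof -
    have "{} \<in> sets R" by simp
    then have "measure Pa {x \<in> space Pa. restrict x (UNIV - {i}) \<in> {}}
        \<le> exp epsJ * measure Pb {x \<in> space Pb. restrict x (UNIV - {i}) \<in> {}} + delta"
      using MJ_jdp[unfolded jdp_def, rule_format, where i=i and a=a and b=b and s=s and B="{}"] unfolding Pa_def Pb_def by simp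
    then show ?thesis by simp
  qed
  have dpMD: "measure (MD (d(j := u))) B \<le> exp epsD * measure (MD (d(j := v))) B"
    if "u \<in> space X" "v \<in> space X" "\<And>k. d k \<in> space X" for d j u v
    using MD_dp[unfolded dp_def, rule_format, where i=j and a=u and b=v and d=d and B=B] B that by simp
  define G where "G y = min 1 (exp epsD * measure (MD (y(i := c))) B)" for y :: "'i \<Rightarrow> 'x"
  define g where "g x = G (restrict x (UNIV - {i}))" for x :: "'i \<Rightarrow> 'x"
  have upd_meas: "(\<lambda>y. y(i := c)) \<in> R \<rightarrow>\<^sub>M X'"
    unfolding X'_def
  proof -
    have "(\<lambda>y j. (if j = i then (\<lambda>_. c) else (\<lambda>y. y j)) y) \<in> R \<rightarrow>\<^sub>M PiM UNIV (\<lambda>_::'i. X)"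
    proof (rule measurable_PiM_single')
      fix j :: 'i
      show "(\<lambda>y. (if j = i then (\<lambda>_. c) else (\<lambda>y. y j)) y) \<in> R \<rightarrow>\<^sub>M X"
      proof (cases "j = i")
        case True
        then show ?thesis using measurable_const[OF cX, of R] by simp
      next
        case False
        then show ?thesis using measurable_component_singleton[of j "UNIV - {i}" "\<lambda>_. X"]
          unfolding R_def by simp
      qed
    next
      show "(\<lambda>y j. (if j = i then (\<lambda>_. c) else (\<lambda>y. y j)) y) \<in> space R \<rightarrow> (\<Pi>\<^sub>E j\<in>UNIV. space X)"
      proof
        fix y assume y: "y \<in> space R"
        have "y j \<in> space X" if "j \<noteq> i" for j
          using y that unfolding R_def space_PiM by (simp add: PiE_iff)
        then show "(\<lambda>j. (if j = i then (\<lambda>_. c) else (\<lambda>y. y j)) y) \<in> (\<Pi>\<^sub>E j\<in>UNIV. space X)"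
          using cX by (simp add: PiE_iff)
      qed
    qed
    moreover have "(\<lambda>y j. (if j = i then (\<lambda>_. c) else (\<lambda>y. y j)) y) = (\<lambda>y. y(i := c))"
      by (auto simp: fun_eq_iff)
    ultimately show "(\<lambda>y. y(i := c)) \<in> R \<rightarrow>\<^sub>M PiM UNIV (\<lambda>_::'i. X)" by simp
  qed
  have G_meas: "G \<in> borel_measurable R"
  proof -
    have "(\<lambda>y. MD (y(i := c))) \<in> R \<rightarrow>\<^sub>M prob_algebra Out"
      using measurable_compose[OF upd_meas MD_kernel[folded X'_def]] .
    then have "(\<lambda>y. measure (MD (y(i := c))) B) \<in> borel_measurable R"
      by (rule measurable_compose[OF _ measurable_measure_prob_algebra[OF B]])
    then show ?thesis unfolding G_def by measurable
  qed
  have restr_meas: "(\<lambda>x. restrict x (UNIV - {i})) \<in> X' \<rightarrow>\<^sub>M R"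
    unfolding X'_def R_def by (rule measurable_restrict_subset) simp
  have g_meas: "g \<in> borel_measurable X'"
    unfolding g_def using measurable_compose[OF restr_meas G_meas] by simp
  have g_eq: "g x = min 1 (exp epsD * measure (MD (x(i := c))) B)" for x
  proof -
    have "(restrict x (UNIV - {i}))(i := c) = x(i := c)" by (auto simp: fun_eq_iff)
    then show ?thesis unfolding g_def G_def by simp
  qed
  have g01: "0 \<le> g x \<and> g x \<le> 1" for x unfolding g_eq by auto
  have Xpt: "x j \<in> space X" if "x \<in> space X'" for x j using that spX' by auto
  have F_le_g: "measure (MD x) B \<le> g x" if x: "x \<in> space X'" for x
  proof -
    have "measure (MD (x(i := x i))) B \<le> exp epsD * measure (MD (x(i := c))) B"
      using dpMD[of "x i" c x i] Xpt[OF x] cX by blast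
    moreover have "measure (MD x) B \<le> 1"
    proof -
      have "MD x \<in> space (prob_algebra Out)" using MD_kernel x unfolding X'_def measurable_def by blast
      then have "prob_space (MD x)" unfolding space_prob_algebra by simp
      then show ?thesis by (rule prob_space.prob_le_1)
    qed
    ultimately show ?thesis unfolding g_eq by simp
  qed
  have g_le_F: "g x \<le> exp (2 * epsD) * measure (MD x) B" if x: "x \<in> space X'" for x
  proof -
    have "measure (MD (x(i := c))) B \<le> exp epsD * measure (MD (x(i := x i))) B"
      using dpMD[of c "x i" x i] Xpt[OF x] cX by blast
    then have "exp epsD * measure (MD (x(i := c))) B \<le> exp epsD * (exp epsD * measure (MD x) B)"
      by simp
    also have "\<dots> = exp (2 * epsD) * measure (MD x) B"
    proof -
      have "exp epsD * exp epsD = exp (2 * epsD)" by (metis exp_add mult_2)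
      then show ?thesis by (simp add: mult.assoc[symmetric])
    qed
    finally show ?thesis unfolding g_eq by simp
  qed
  have MJa: "Pa \<in> space (prob_algebra X')" and MJb: "Pb \<in> space (prob_algebra X')"
    using MJ_prob unfolding Pa_def Pb_def X'_def by blast+
  have MDk: "MD \<in> X' \<rightarrow>\<^sub>M prob_algebra Out" using MD_kernel unfolding X'_def .
  have kern: "prob_space (MD x)" if "x \<in> space X'" for x
    using measurable_space[OF MDk that] unfolding space_prob_algebra by simp
  have Ea_eq: "emeasure (Pa \<bind> MD) B = (\<integral>\<^sup>+x. emeasure (MD x) B \<partial>Pa)"
    by (rule emeasure_bind_prob_algebra[OF MJa MDk B])
  have Eb_eq: "emeasure (Pb \<bind> MD) B = (\<integral>\<^sup>+x. emeasure (MD x) B \<partial>Pb)"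
    by (rule emeasure_bind_prob_algebra[OF MJb MDk B])
  have E1: "emeasure (Pa \<bind> MD) B \<le> (\<integral>\<^sup>+x. ennreal (g x) \<partial>Pa)"
    unfolding Ea_eq
  proof (rule nn_integral_mono)
    fix x assume "x \<in> space Pa"
    then have x: "x \<in> space X'" using spPa by simp
    show "emeasure (MD x) B \<le> ennreal (g x)"
      using pem[OF kern[OF x]] F_le_g[OF x] by (simp add: ennreal_leI)
  qed
  have g_measPa: "g \<in> borel_measurable Pa"
    using g_meas measurable_cong_sets[OF Pa(2) refl] by blast
  have E2: "(\<integral>\<^sup>+x. ennreal (g x) \<partial>Pa) \<le> ennreal (exp epsJ) * (\<integral>\<^sup>+x. ennreal (g x) \<partial>Pb) + ennreal delta"
  proof (rule layer2)
    show "finite_measure Pa" using Pa(1) by (rule prob_space.finite_measure)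
    show "finite_measure Pb" using Pb(1) by (rule prob_space.finite_measure)
    show "sets Pa = sets Pb" using Pa Pb by simp
    show "g \<in> borel_measurable Pa" by (rule g_measPa)
    show "0 \<le> g x \<and> g x \<le> 1" for x by (rule g01)
    show "0 \<le> delta" by (rule d0)
    fix t :: real
    define Bt where "Bt = {y \<in> space R. t < G y}"
    have Bt: "Bt \<in> sets R" unfolding Bt_def using G_meas by measurable
    have rs: "restrict x (UNIV - {i}) \<in> space R" if "x \<in> space X'" for x
      using measurable_space[OF restr_meas that] .
    have seta: "{x \<in> space Pa. t < g x} = {x \<in> space Pa. restrict x (UNIV - {i}) \<in> Bt}"
      using rs spPa unfolding Bt_def g_def by auto
    have setb: "{x \<in> space Pb. t < g x} = {x \<in> space Pb. restrict x (UNIV - {i}) \<in> Bt}"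
      using rs spPb unfolding Bt_def g_def by auto
    have J: "measure Pa {x \<in> space Pa. restrict x (UNIV - {i}) \<in> Bt}
        \<le> exp epsJ * measure Pb {x \<in> space Pb. restrict x (UNIV - {i}) \<in> Bt} + delta"
      using MJ_jdp[unfolded jdp_def, rule_format, where i=i and a=a and b=b and s=s and B=Bt] Bt
      unfolding Pa_def Pb_def R_def by simp
    have "emeasure Pa {x \<in> space Pa. t < g x} = ennreal (measure Pa {x \<in> space Pa. t < g x})"
      using pem[OF Pa(1)] by simp
    also have "\<dots> \<le> ennreal (exp epsJ * measure Pb {x \<in> space Pb. t < g x} + delta)"
      using J seta setb by (simp add: ennreal_leI)
    also have "\<dots> = ennreal (exp epsJ) * emeasure Pb {x \<in> space Pb. t < g x} + ennreal delta"
      using pem[OF Pb(1)] d0 by (simp add: ennreal_plus ennreal_mult)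
    finally show "emeasure Pa {x \<in> space Pa. t < g x} \<le> ennreal (exp epsJ) * emeasure Pb {x \<in> space Pb. t < g x} + ennreal delta" .
  qed
  have E3: "(\<integral>\<^sup>+x. ennreal (g x) \<partial>Pb) \<le> ennreal (exp (2 * epsD)) * emeasure (Pb \<bind> MD) B"
  proof -
    have km: "(\<lambda>x. emeasure (MD x) B) \<in> borel_measurable Pb"
      using measurable_emeasure_kernel[OF measurable_prob_algebraD[OF MDk] B] measurable_cong_sets[OF Pb(2) refl] by blast
    have "(\<integral>\<^sup>+x. ennreal (g x) \<partial>Pb) \<le> (\<integral>\<^sup>+x. ennreal (exp (2 * epsD)) * emeasure (MD x) B \<partial>Pb)"
    proof (rule nn_integral_mono)
      fix x assume "x \<in> space Pb"
      then have x: "x \<in> space X'" using spPb by simp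
      show "ennreal (g x) \<le> ennreal (exp (2 * epsD)) * emeasure (MD x) B"
        using pem[OF kern[OF x]] g_le_F[OF x]
        by (simp add: ennreal_mult[symmetric] ennreal_leI)
    qed
    also have "\<dots> = ennreal (exp (2 * epsD)) * emeasure (Pb \<bind> MD) B"
      unfolding Eb_eq using km by (rule nn_integral_cmult)
    finally show ?thesis .
  qed
  have pa: "prob_space (Pa \<bind> MD)" by (rule prob_space_bind'[OF MJa MDk])
  have pb: "prob_space (Pb \<bind> MD)" by (rule prob_space_bind'[OF MJb MDk])
  have "ennreal (measure (Pa \<bind> MD) B) \<le> ennreal (exp epsJ) * (ennreal (exp (2 * epsD)) * ennreal (measure (Pb \<bind> MD) B)) + ennreal delta"
  proof -
    have "ennreal (measure (Pa \<bind> MD) B) = emeasure (Pa \<bind> MD) B"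
      using pem[OF pa] by simp
    also have "\<dots> \<le> ennreal (exp epsJ) * (\<integral>\<^sup>+x. ennreal (g x) \<partial>Pb) + ennreal delta"
      using E1 E2 by (rule order_trans)
    also have "\<dots> \<le> ennreal (exp epsJ) * (ennreal (exp (2 * epsD)) * emeasure (Pb \<bind> MD) B) + ennreal delta"
      using E3 by (intro add_right_mono mult_left_mono) auto
    also have "emeasure (Pb \<bind> MD) B = ennreal (measure (Pb \<bind> MD) B)"
      using pem[OF pb] by simp
    finally show ?thesis .
  qed
  also have "\<dots> = ennreal (exp (2 * epsD + epsJ) * measure (Pb \<bind> MD) B + delta)"
    using d0 by (simp add: ennreal_plus ennreal_mult[symmetric] exp_add mult.assoc mult.commute mult.left_commute)
  finally have "measure (Pa \<bind> MD) B \<le> exp (2 * epsD + epsJ) * measure (Pb \<bind> MD) B + delta"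
    using d0 by (subst (asm) ennreal_le_iff) auto
  then show "measure (MJ (s(i := a)) \<bind> MD) B \<le> exp (2 * epsD + epsJ) * measure (MJ (s(i := b)) \<bind> MD) B + delta"
    unfolding Pa_def Pb_def .
qed

end
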